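(* Let $k$ be a real constant and, on the region $x^2-y^2>0$, let $V(x,y)=k(x^2-y^2)^{-2/3}$. With $L=x\dot y-y\dot x$, the function $$J=(\dot y^2-\dot x^2)L+4V(x,y)\,(y\dot x+x\dot y)$$ is a first integral of $\ddot x=-V_{,x}$, $\ddot y=-V_{,y}$.
   Context: A first integral is a function of $(t,x,y,\dot x,\dot y)$ whose total time derivative vanishes along every solution of the given equations of motion. *)

theory Defs
  imports "HOL-Analysis.Analysis"
begin

definition V :: "real \<Rightarrow> real \<Rightarrow> real \<Rightarrow> real" where
  "V k x y = k * (x\<^sup>2 - y\<^sup>2) powr (-2/3)"

definition J :: "real \<Rightarrow> real \<Rightarrow> real \<Rightarrow> real \<Rightarrow> real \<Rightarrow> real" where
  "J k x y xd yd = (yd\<^sup>2 - xd\<^sup>2) * (x * yd - y * xd) + 4 * V k x y * (y * xd + x * yd)"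

end

theory Submission
  imports Defs
begin

theorem mainTheorem5:
  fixes k :: real and I :: "real set"
    and x y xd yd xdd ydd :: "real \<Rightarrow> real"
  assumes "open I"
    and region: "\<And>t. t \<in> I \<Longrightarrow> (x t)\<^sup>2 - (y t)\<^sup>2 > 0"
    and dx: "\<And>t. t \<in> I \<Longrightarrow> (x has_real_derivative xd t) (at t)"
    and dy: "\<And>t. t \<in> I \<Longrightarrow> (y has_real_derivative yd t) (at t)"
    and dxd: "\<And>t. t \<in> I \<Longrightarrow> (xd has_real_derivative xdd t) (at t)"
    and dyd: "\<And>t. t \<in> I \<Longrightarrow> (yd has_real_derivative ydd t) (at t)"
    and eqx: "\<And>t. t \<in> I \<Longrightarrow> xdd t = - deriv (\<lambda>u. V k u (y t)) (x t)"
    and eqy: "\<And>t. t \<in> I \<Longrightarrow> ydd t = - deriv (\<lambda>v. V k (x t) v) (y t)"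
    and "t \<in> I"
  shows "((\<lambda>s. J k (x s) (y s) (xd s) (yd s)) has_real_derivative 0) (at t)"
proof -
  define P where "P = (x t)\<^sup>2 - (y t)\<^sup>2"
  define q where "q = P powr (-2/3)"
  have Pp: "P > 0" using region[OF assms(9)] P_def by simp
  have r: "P powr (-2/3 - 1) = q / P"
    unfolding q_def using Pp powr_diff[of P "-2/3" 1] by simp
  have pw: "((\<lambda>z. z powr (-2/3)) has_real_derivative (-2/3) * P powr (-2/3 - 1)) (at P)"
    by (rule has_real_derivative_powr[OF Pp])
  have du: "((\<lambda>u. V k u (y t)) has_real_derivative k * ((-2/3) * P powr (-2/3 - 1) * (2 * x t))) (at (x t))"
  proof -
    have "((\<lambda>u. u\<^sup>2 - (y t)\<^sup>2) has_real_derivative 2 * x t) (at (x t))"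
      by (auto intro!: derivative_eq_intros)
    from DERIV_chain2[OF pw[unfolded P_def] this]
    show ?thesis unfolding V_def P_def by (intro DERIV_cmult) simp
  qed
  have dv: "((\<lambda>v. V k (x t) v) has_real_derivative k * ((-2/3) * P powr (-2/3 - 1) * (- 2 * y t))) (at (y t))"
  proof -
    have "((\<lambda>v. (x t)\<^sup>2 - v\<^sup>2) has_real_derivative - 2 * y t) (at (y t))"
      by (auto intro!: derivative_eq_intros)
    from DERIV_chain2[OF pw[unfolded P_def] this]
    show ?thesis unfolding V_def P_def by (intro DERIV_cmult) simp
  qed
  have X: "xdd t = k * (4/3) * x t * q / P"
    using eqx[OF assms(9)] DERIV_imp_deriv[OF du] r Pp by (simp add: field_simps)
  have Y: "ydd t = - k * (4/3) * y t * q / P"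
    using eqy[OF assms(9)] DERIV_imp_deriv[OF dv] r Pp by (simp add: field_simps)
  have hV: "((\<lambda>s. V k (x s) (y s)) has_real_derivative
      k * ((-2/3) * P powr (-2/3 - 1) * (2 * x t * xd t - 2 * y t * yd t))) (at t)"
  proof -
    have "((\<lambda>s. (x s)\<^sup>2 - (y s)\<^sup>2) has_real_derivative 2 * x t * xd t - 2 * y t * yd t) (at t)"
      by (auto intro!: derivative_eq_intros dx dy assms(9))
    from DERIV_chain2[OF pw[unfolded P_def] this]
    show ?thesis unfolding V_def P_def by (intro DERIV_cmult) simp
  qed
  have Vt: "V k (x t) (y t) = k * q" unfolding V_def q_def P_def by simp
  have hJ: "((\<lambda>s. J k (x s) (y s) (xd s) (yd s)) has_real_derivative
     (2 * yd t * ydd t - 2 * xd t * xdd t) * (x t * yd t - y t * xd t)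
     + ((yd t)\<^sup>2 - (xd t)\<^sup>2) * (xd t * yd t + x t * ydd t - yd t * xd t - y t * xdd t)
     + 4 * (k * ((-2/3) * P powr (-2/3 - 1) * (2 * x t * xd t - 2 * y t * yd t))) * (y t * xd t + x t * yd t)
     + 4 * V k (x t) (y t) * (yd t * xd t + y t * xdd t + xd t * yd t + x t * ydd t)) (at t)"
    unfolding J_def
    by (rule derivative_eq_intros refl hV dx dy dxd dyd assms(9))+
       (simp add: power2_eq_square algebra_simps)
  have "(2 * yd t * ydd t - 2 * xd t * xdd t) * (x t * yd t - y t * xd t)
     + ((yd t)\<^sup>2 - (xd t)\<^sup>2) * (xd t * yd t + x t * ydd t - yd t * xd t - y t * xdd t)
     + 4 * (k * ((-2/3) * P powr (-2/3 - 1) * (2 * x t * xd t - 2 * y t * yd t))) * (y t * xd t + x t * yd t)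
     + 4 * V k (x t) (y t) * (yd t * xd t + y t * xdd t + xd t * yd t + x t * ydd t) = 0"
    unfolding X Y r Vt using Pp
    apply (simp add: divide_simps)
    unfolding P_def power2_eq_square by algebra
  with hJ show ?thesis by simp
qed

end
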